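(* Suppose $S,T\subseteq[r]$ and $S$ dominates $T$. Let $u,v$ be $\mathbf{ab}$-monomials, possibly empty. Then (1) $m(S)\cdot\mathbf a\cdot v$ dominates $m(T)\cdot\mathbf a\cdot v$; (2) $u\cdot\mathbf a\cdot m(S)$ dominates $u\cdot\mathbf a\cdot m(T)$; (3) $u\cdot\mathbf a\cdot m(S)\cdot\mathbf a\cdot v$ dominates $u\cdot\mathbf a\cdot m(T)\cdot\mathbf a\cdot v$.
   Context: For a permutation $\pi=a_1\cdots a_{N+1}\in S_{N+1}$, its descent set is $\{i\in[N]:a_i>a_{i+1}\}$, and $D(S)$ is the set of permutations in $S_{N+1}$ with descent set $S\subseteq[N]$. The inversion set is $I(\pi)=\{(a_i,a_j):i<j,\ a_i>a_j\}$; weak Bruhat order: $\pi\le_w\pi'$ iff $I(\pi)\subseteq I(\pi')$. For $S,T\subseteq[N]$, $S$ dominates $T$ if there is an injection $\phi:D(T)\to D(S)$ with $\pi\le_w\phi(\pi)$ for all $\pi\in D(T)$. For $S\subseteq[N]$, $m(S)=u_1\cdots u_N$ is the word in noncommuting letters $\mathbf a,\mathbf b$ with $u_i=\mathbf b$ if $i\in S$ and $u_i=\mathbf a$ otherwise; conversely a word of length $N$ determines a subset of $[N]$, and dominance between two words of the same length $N$ means dominance between the corresponding subsets of $[N]$ (permutations in $S_{N+1}$). *)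

theory Defs
  imports Main
begin

text \<open>Permutations of S_{N+1} in one-line notation: lists a_1 ... a_{N+1}
  (stored 0-indexed) that are arrangements of the values 1..N+1.\<close>

definition is_perm :: "nat \<Rightarrow> nat list \<Rightarrow> bool" where
  "is_perm n xs \<longleftrightarrow> distinct xs \<and> set xs = {1..n}"

definition descents :: "nat list \<Rightarrow> nat set" where
  "descents xs = {i. 1 \<le> i \<and> i < length xs \<and> xs ! (i - 1) > xs ! i}"

definition Dset :: "nat \<Rightarrow> nat set \<Rightarrow> nat list set" where
  "Dset N S = {xs. is_perm (N + 1) xs \<and> descents xs = S}"

definition inversions :: "nat list \<Rightarrow> (nat \<times> nat) set" where
  "inversions xs = {(xs ! i, xs ! j) | i j. i < j \<and> j < length xs \<and> xs ! i > xs ! j}"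

definition weak_le :: "nat list \<Rightarrow> nat list \<Rightarrow> bool" where
  "weak_le p q \<longleftrightarrow> inversions p \<subseteq> inversions q"

definition dominates :: "nat \<Rightarrow> nat set \<Rightarrow> nat set \<Rightarrow> bool" where
  "dominates N S T \<longleftrightarrow> (\<exists>\<phi>. inj_on \<phi> (Dset N T) \<and> \<phi> ` Dset N T \<subseteq> Dset N S \<and>
      (\<forall>\<pi>\<in>Dset N T. weak_le \<pi> (\<phi> \<pi>)))"

datatype letter = a | b

type_synonym word = "letter list"

definition mword :: "nat \<Rightarrow> nat set \<Rightarrow> word" where
  "mword N S = map (\<lambda>i. if i \<in> S then b else a) [1..<N + 1]"

definition word_set :: "word \<Rightarrow> nat set" where
  "word_set w = {i. 1 \<le> i \<and> i \<le> length w \<and> w ! (i - 1) = b}"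

definition word_dominates :: "word \<Rightarrow> word \<Rightarrow> bool" where
  "word_dominates w1 w2 \<longleftrightarrow> length w1 = length w2 \<and>
     dominates (length w1) (word_set w1) (word_set w2)"

end

theory Submission
  imports Defs
begin

definition fA :: "nat set \<Rightarrow> nat \<Rightarrow> nat" where
  "fA A i = sorted_list_of_set A ! (i - 1)"
definition gA :: "nat set \<Rightarrow> nat \<Rightarrow> nat" where
  "gA A = the_inv_into {1..card A} (fA A)"

lemma fA_mono:
  assumes "finite A" "1 \<le> i" "i < j" "j \<le> card A"
  shows "fA A i < fA A j"
proof -
  have "sorted_wrt (<) (sorted_list_of_set A)" using assms(1) by (simp add: strict_sorted_list_of_set)
  moreover have "j - 1 < length (sorted_list_of_set A)" using assms by (simp add: length_sorted_list_of_set)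
  ultimately show ?thesis unfolding fA_def using assms
    by (metis diff_less_mono order_less_le_trans sorted_wrt_nth_less)
qed

lemma fA_image:
  assumes "finite A" shows "fA A ` {1..card A} = A"
proof -
  let ?L = "sorted_list_of_set A"
  have "fA A ` {1..card A} = (\<lambda>j. ?L ! j) ` {0..<length ?L}"
    unfolding fA_def
    apply (auto simp: length_sorted_list_of_set image_iff)
     apply (rule_tac x="xa - 1" in bexI, auto)
    apply (rule_tac x="Suc xa" in bexI, auto)
    done
  also have "\<dots> = set ?L" by (auto simp: in_set_conv_nth)
  finally show ?thesis using assms by simp
qed

lemma fA_inj: "finite A \<Longrightarrow> inj_on (fA A) {1..card A}"
  unfolding inj_on_def
  by (metis atLeastAtMost_iff fA_mono linorder_neq_iff order_less_irrefl)

lemma fA_gA: "finite A \<Longrightarrow> z \<in> A \<Longrightarrow> fA A (gA A z) = z"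
  unfolding gA_def by (metis f_the_inv_into_f fA_image fA_inj)

lemma gA_range: "finite A \<Longrightarrow> z \<in> A \<Longrightarrow> gA A z \<in> {1..card A}"
  unfolding gA_def by (metis fA_image fA_inj the_inv_into_into order_refl)

lemma gA_inj: "finite A \<Longrightarrow> inj_on (gA A) A"
  unfolding gA_def by (metis fA_image fA_inj inj_on_the_inv_into)

lemma gA_image: "finite A \<Longrightarrow> gA A ` A = {1..card A}"
  unfolding gA_def by (metis fA_image fA_inj the_inv_into_onto)

lemma map_descents:
  assumes "\<forall>p\<in>set xs. \<forall>q\<in>set xs. p < q \<longrightarrow> f p < f q"
  shows "descents (map f xs) = descents xs"
proof -
  have "f (xs!(i-1)) > f (xs!i) \<longleftrightarrow> xs!(i-1) > xs!i" if "1 \<le> i" "i < length xs" for i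
  proof -
    have m: "xs!(i-1) \<in> set xs" "xs!i \<in> set xs" using that by auto
    show ?thesis using assms m by (metis linorder_neqE_nat order_less_asym order_less_irrefl)
  qed
  then show ?thesis unfolding descents_def by auto
qed

lemma map_weak_le:
  assumes "\<forall>p\<in>set xs. \<forall>q\<in>set xs. p < q \<longrightarrow> f p < f q" "set ys = set xs"
    and "weak_le xs ys"
  shows "weak_le (map f xs) (map f ys)"
  unfolding weak_le_def
proof
  fix pq assume "pq \<in> inversions (map f xs)"
  then obtain i j where ij: "i < j" "j < length xs" "f (xs!i) > f (xs!j)" "pq = (f (xs!i), f (xs!j))"
    unfolding inversions_def by auto
  have m: "xs!i \<in> set xs" "xs!j \<in> set xs" using ij by auto
  have "xs!i > xs!j" using assms(1) m ij(3) by (metis linorder_neqE_nat order_less_asym order_less_irrefl)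
  then have "(xs!i, xs!j) \<in> inversions xs" unfolding inversions_def using ij by blast
  then have "(xs!i, xs!j) \<in> inversions ys" using assms(3) unfolding weak_le_def by blast
  then obtain i' j' where "i' < j'" "j' < length ys" "ys!i' > ys!j'" "xs!i = ys!i'" "xs!j = ys!j'"
    unfolding inversions_def by auto
  then show "pq \<in> inversions (map f ys)" unfolding inversions_def using ij by force
qed

lemma inversions_append:
  "inversions (xs @ ys) = inversions xs \<union> inversions ys \<union> {(p,q). p \<in> set xs \<and> q \<in> set ys \<and> q < p}"
proof (intro equalityI subsetI)
  fix pq assume "pq \<in> inversions (xs @ ys)"
  then obtain i j where ij: "i < j" "j < length xs + length ys" "(xs@ys)!i > (xs@ys)!j"
     "pq = ((xs@ys)!i, (xs@ys)!j)" unfolding inversions_def by auto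
  show "pq \<in> inversions xs \<union> inversions ys \<union> {(p,q). p \<in> set xs \<and> q \<in> set ys \<and> q < p}"
  proof (cases "j < length xs")
    case True
    then show ?thesis using ij unfolding inversions_def by (auto simp: nth_append)
  next
    case False
    note F = False
    show ?thesis
    proof (cases "i < length xs")
      case True
      then show ?thesis using ij F by (auto simp: nth_append)
    next
      case False
      then have "pq \<in> inversions ys" unfolding inversions_def using ij F
        apply (simp add: nth_append)
        apply (rule exI[of _ "i - length xs"], simp, rule exI[of _ "j - length xs"])
        by auto
      then show ?thesis by blast
    qed
  qed
next
  fix pq assume "pq \<in> inversions xs \<union> inversions ys \<union> {(p,q). p \<in> set xs \<and> q \<in> set ys \<and> q < p}"
  then consider "pq \<in> inversions xs" | "pq \<in> inversions ys" | "pq \<in> {(p,q). p \<in> set xs \<and> q \<in> set ys \<and> q < p}" by blast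
  then show "pq \<in> inversions (xs @ ys)"
  proof cases
    case 1
    then obtain i j where "i < j" "j < length xs" "xs!i > xs!j" "pq = (xs!i, xs!j)"
      unfolding inversions_def by auto
    then show ?thesis unfolding inversions_def mem_Collect_eq
      by (intro exI[of _ i] exI[of _ j]) (simp add: nth_append)
  next
    case 2
    then obtain i j where "i < j" "j < length ys" "ys!i > ys!j" "pq = (ys!i, ys!j)"
      unfolding inversions_def by auto
    then show ?thesis unfolding inversions_def mem_Collect_eq
      by (intro exI[of _ "i + length xs"] exI[of _ "j + length xs"]) (simp add: nth_append)
  next
    case 3
    then obtain i j where "i < length xs" "j < length ys" "ys!j < xs!i" "pq = (xs!i, ys!j)"
      by (auto simp: in_set_conv_nth)
    then show ?thesis unfolding inversions_def mem_Collect_eq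
      by (intro exI[of _ i] exI[of _ "j + length xs"]) (simp add: nth_append)
  qed
qed


lemma weak_le_first:
  assumes "distinct \<sigma>" "distinct \<tau>" "set \<sigma> = set \<tau>" "weak_le \<sigma> \<tau>" "0 < length \<sigma>"
  shows "\<sigma>!0 \<le> \<tau>!0"
proof (rule ccontr)
  assume c: "\<not> \<sigma>!0 \<le> \<tau>!0"
  have lt: "length \<tau> = length \<sigma>" using assms by (metis distinct_card)
  have "\<tau>!0 \<in> set \<sigma>" using assms lt by (metis nth_mem)
  then obtain j where j: "j < length \<sigma>" "\<sigma>!j = \<tau>!0" by (auto simp: in_set_conv_nth)
  have "j \<noteq> 0" using c j by (metis order_refl)
  then have "(\<sigma>!0, \<sigma>!j) \<in> inversions \<sigma>" unfolding inversions_def using j c by force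
  then have "(\<sigma>!0, \<sigma>!j) \<in> inversions \<tau>" using assms(4) unfolding weak_le_def by blast
  then obtain i' j' where ij: "i' < j'" "j' < length \<tau>" "\<tau>!j' = \<sigma>!j"
    unfolding inversions_def by auto
  then have "j' = 0" using nth_eq_iff_index_eq[OF assms(2), of j' 0] j lt assms(5) by auto
  then show False using ij by simp
qed

lemma weak_le_last:
  assumes "distinct \<sigma>" "distinct \<tau>" "set \<sigma> = set \<tau>" "weak_le \<sigma> \<tau>" "0 < length \<sigma>"
  shows "\<tau>!(length \<sigma> - 1) \<le> \<sigma>!(length \<sigma> - 1)"
proof (rule ccontr)
  let ?n = "length \<sigma> - 1"
  assume c: "\<not> \<tau>!?n \<le> \<sigma>!?n"
  have lt: "length \<tau> = length \<sigma>" using assms by (metis distinct_card)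
  have "\<tau>!?n \<in> set \<sigma>" using assms lt by (metis nth_mem diff_less zero_less_one)
  then obtain j where j: "j < length \<sigma>" "\<sigma>!j = \<tau>!?n" by (auto simp: in_set_conv_nth)
  have "j \<noteq> ?n" using c j by auto
  then have "j < ?n" using j by auto
  then have "(\<sigma>!j, \<sigma>!?n) \<in> inversions \<sigma>" unfolding inversions_def using j c by force
  then have "(\<sigma>!j, \<sigma>!?n) \<in> inversions \<tau>" using assms(4) unfolding weak_le_def by blast
  then obtain i' j' where ij: "i' < j'" "j' < length \<tau>" "\<tau>!i' = \<sigma>!j"
    unfolding inversions_def by auto
  then have "i' = ?n" using nth_eq_iff_index_eq[OF assms(2), of i' ?n] j lt assms(5) by auto
  then show False using ij lt by simp
qed


lemma nth_QPR: "(Q@P@R)!i = (if i < length Q then Q!i else if i < length Q + length P then P!(i - length Q) else R!(i - length Q - length P))"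
  by (auto simp: nth_append)

lemma desc_outside:
  assumes "length P' = length P" "\<not> (length Q \<le> i \<and> i \<le> length Q + length P)"
  shows "i \<in> descents (Q@P'@R) \<longleftrightarrow> i \<in> descents (Q@P@R)"
proof -
  have "(Q@P'@R)!(i-1) = (Q@P@R)!(i-1)" "(Q@P'@R)!i = (Q@P@R)!i"
    using assms unfolding nth_QPR by auto
  then show ?thesis unfolding descents_def using assms(1) by simp
qed

lemma desc_block:
  assumes "1 \<le> j" "j < length P"
  shows "length Q + j \<in> descents (Q@P@R) \<longleftrightarrow> j \<in> descents P"
proof -
  have "(Q@P@R)!(length Q + j - 1) = P!(j-1)" "(Q@P@R)!(length Q + j) = P!j"
    using assms unfolding nth_QPR by auto
  then show ?thesis unfolding descents_def using assms by simp
qed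

lemma desc_left:
  assumes "Q \<noteq> []" "P \<noteq> []"
  shows "length Q \<in> descents (Q@P@R) \<longleftrightarrow> Q!(length Q - 1) > P!0"
proof -
  have "(Q@P@R)!(length Q - 1) = Q!(length Q - 1)" "(Q@P@R)!(length Q) = P!0"
    using assms unfolding nth_QPR by auto
  then show ?thesis unfolding descents_def using assms by (simp add: Suc_le_eq)
qed

lemma desc_right:
  assumes "R \<noteq> []" "P \<noteq> []"
  shows "length Q + length P \<in> descents (Q@P@R) \<longleftrightarrow> P!(length P - 1) > R!0"
proof -
  obtain m where m: "length P = Suc m" using assms by (cases P) auto
  then have "(Q@P@R)!(length Q + length P - 1) = P!(length P - 1)" "(Q@P@R)!(length Q + length P) = R!0"
    unfolding nth_QPR by auto
  then show ?thesis unfolding descents_def using assms m by simp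
qed

lemma length_mword[simp]: "length (mword r S) = r"
  by (simp add: mword_def)

lemma nth_mword: "j < r \<Longrightarrow> mword r S ! j = (if Suc j \<in> S then b else a)"
  by (simp del: upt_Suc add: mword_def nth_map_upt)

lemma ws_block:
  assumes "1 \<le> j" "j \<le> r"
  shows "length x + j \<in> word_set (x @ mword r S @ y) \<longleftrightarrow> j \<in> S"
proof -
  have "(x @ mword r S @ y) ! (length x + j - 1) = (if j \<in> S then b else a)"
    using assms unfolding nth_QPR by (auto simp: nth_mword)
  then show ?thesis unfolding word_set_def using assms by simp
qed

lemma ws_outside:
  assumes "\<not> (length x < i \<and> i \<le> length x + r)"
  shows "i \<in> word_set (x @ mword r S @ y) \<longleftrightarrow> i \<in> word_set (x @ mword r T @ y)"
proof (cases "i = 0")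
  case True then show ?thesis unfolding word_set_def by simp
next
  case False
  have "(x @ mword r S @ y) ! (i - 1) = (x @ mword r T @ y) ! (i - 1)"
    using assms False unfolding nth_QPR by auto
  then show ?thesis unfolding word_set_def by simp
qed

lemma ws_left:
  assumes "x \<noteq> []" "last x = a"
  shows "length x \<notin> word_set (x @ mword r S @ y)"
proof -
  have "(x @ mword r S @ y) ! (length x - 1) = a"
    using assms unfolding nth_QPR by (auto simp: last_conv_nth)
  then show ?thesis unfolding word_set_def by simp
qed

lemma ws_right:
  assumes "y \<noteq> []" "hd y = a"
  shows "length x + r + 1 \<notin> word_set (x @ mword r S @ y)"
proof -
  have "(x @ mword r S @ y) ! (length x + r) = a"
    using assms unfolding nth_QPR by (auto simp: hd_conv_nth)
  then show ?thesis unfolding word_set_def by simp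
qed


lemma perm_length: "is_perm n xs \<Longrightarrow> length xs = n"
  unfolding is_perm_def by (metis card_atLeastAtMost diff_Suc_1 distinct_card)

lemma main:
  assumes ST: "T \<subseteq> {1..r}"
    and dom: "dominates r S T"
    and hx: "x = [] \<or> last x = a" and hy: "y = [] \<or> hd y = a"
  shows "word_dominates (x @ mword r S @ y) (x @ mword r T @ y)"
proof -
  obtain \<phi> where \<phi>inj: "inj_on \<phi> (Dset r T)" and \<phi>img: "\<phi> ` Dset r T \<subseteq> Dset r S"
    and \<phi>le: "\<forall>\<pi>\<in>Dset r T. weak_le \<pi> (\<phi> \<pi>)"
    using dom unfolding dominates_def by blast
  define k where "k = length x"
  define WS where "WS = word_set (x @ mword r S @ y)"
  define WT where "WT = word_set (x @ mword r T @ y)"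
  define N where "N = k + r + length y"
  have lenw: "length (x @ mword r S @ y) = N" "length (x @ mword r T @ y) = N"
    by (simp_all add: N_def k_def)
  define Pf where "Pf = (\<lambda>\<pi>::nat list. take (r+1) (drop k \<pi>))"
  define Af where "Af = (\<lambda>\<pi>. set (Pf \<pi>))"
  define \<sigma>f where "\<sigma>f = (\<lambda>\<pi>. map (gA (Af \<pi>)) (Pf \<pi>))"
  define P'f where "P'f = (\<lambda>\<pi>. map (fA (Af \<pi>)) (\<phi> (\<sigma>f \<pi>)))"
  define \<Phi> where "\<Phi> = (\<lambda>\<pi>. take k \<pi> @ P'f \<pi> @ drop (k+r+1) \<pi>)"
  have facts: "length \<pi> = N + 1 \<and> \<pi> = take k \<pi> @ Pf \<pi> @ drop (k+r+1) \<pi> \<and>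
      length (Pf \<pi>) = r + 1 \<and> finite (Af \<pi>) \<and> card (Af \<pi>) = r + 1 \<and>
      \<sigma>f \<pi> \<in> Dset r T \<and> Pf \<pi> = map (fA (Af \<pi>)) (\<sigma>f \<pi>) \<and>
      length (P'f \<pi>) = r + 1 \<and> set (P'f \<pi>) = Af \<pi> \<and> distinct (P'f \<pi>) \<and>
      inversions (Pf \<pi>) \<subseteq> inversions (P'f \<pi>) \<and> descents (P'f \<pi>) = S \<and>
      Pf \<pi> ! 0 \<le> P'f \<pi> ! 0 \<and> P'f \<pi> ! r \<le> Pf \<pi> ! r"
    if \<pi>: "\<pi> \<in> Dset N WT" for \<pi>
  proof -
    have perm: "is_perm (N+1) \<pi>" and dpi: "descents \<pi> = WT" using \<pi> unfolding Dset_def by auto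
    have len: "length \<pi> = N + 1" using perm_length[OF perm] .
    have dec: "\<pi> = take k \<pi> @ Pf \<pi> @ drop (k+r+1) \<pi>" unfolding Pf_def
      by (metis append_take_drop_id drop_drop add.commute add.assoc)
    have lP: "length (Pf \<pi>) = r + 1" unfolding Pf_def using len N_def by simp
    have dP: "distinct (Pf \<pi>)" using perm dec unfolding is_perm_def by (metis distinct_append)
    define A where "A = Af \<pi>"
    define P where "P = Pf \<pi>"
    have finA: "finite A" unfolding A_def Af_def by simp
    have cA: "card A = r + 1" unfolding A_def Af_def using dP lP by (simp add: distinct_card)
    define \<sigma> where "\<sigma> = \<sigma>f \<pi>"
    have \<sigma>def: "\<sigma> = map (gA A) P" unfolding \<sigma>_def \<sigma>f_def A_def P_def ..
    have Pmap: "P = map (fA A) \<sigma>" unfolding \<sigma>def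
      by (simp add: map_idI fA_gA finA A_def Af_def P_def)
    have d\<sigma>: "distinct \<sigma>" unfolding \<sigma>def using gA_inj[OF finA] dP
      by (simp add: distinct_map A_def Af_def P_def)
    have s\<sigma>: "set \<sigma> = {1..r+1}" unfolding \<sigma>def using gA_image[OF finA] cA
      by (simp add: A_def Af_def P_def)
    have fmono: "\<forall>p\<in>{1..r+1}. \<forall>q\<in>{1..r+1}. p < q \<longrightarrow> fA A p < fA A q"
      using fA_mono[OF finA] cA by auto
    have descP: "descents P = T"
    proof (intro equalityI subsetI)
      fix j assume j: "j \<in> descents P"
      then have j1: "1 \<le> j" "j < r + 1" using lP unfolding descents_def P_def by auto
      have "length (take k \<pi>) = k" using len N_def by simp
      then have "k + j \<in> descents \<pi>" using desc_block[of j "Pf \<pi>" "take k \<pi>" "drop (k+r+1) \<pi>"] j j1 lP dec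
        unfolding P_def by simp
      then have "k + j \<in> WT" using dpi by simp
      then show "j \<in> T" using ws_block[of j r x T y] j1 unfolding WT_def k_def by simp
    next
      fix j assume j: "j \<in> T"
      then have j1: "1 \<le> j" "j \<le> r" using ST by auto
      then have "k + j \<in> WT" using ws_block[of j r x T y] j unfolding WT_def k_def by simp
      then have "k + j \<in> descents \<pi>" using dpi by simp
      moreover have "length (take k \<pi>) = k" using len N_def by simp
      ultimately show "j \<in> descents P" using desc_block[of j "Pf \<pi>" "take k \<pi>" "drop (k+r+1) \<pi>"] j1 lP dec
        unfolding P_def by simp
    qed
    have \<sigma>D: "\<sigma> \<in> Dset r T"
    proof -
      have "descents \<sigma> = descents P" using Pmap map_descents[of \<sigma> "fA A"] fmono s\<sigma> by simp
      then show ?thesis unfolding Dset_def is_perm_def using d\<sigma> s\<sigma> descP by simp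
    qed
    define \<tau> where "\<tau> = \<phi> \<sigma>"
    have \<tau>D: "\<tau> \<in> Dset r S" using \<phi>img \<sigma>D unfolding \<tau>_def by blast
    have le: "weak_le \<sigma> \<tau>" using \<phi>le \<sigma>D unfolding \<tau>_def by blast
    have d\<tau>: "distinct \<tau>" and s\<tau>: "set \<tau> = {1..r+1}" and desc\<tau>: "descents \<tau> = S"
      using \<tau>D unfolding Dset_def is_perm_def by auto
    have l\<tau>: "length \<tau> = r + 1" using d\<tau> s\<tau> by (metis distinct_card card_atLeastAtMost diff_Suc_1 add.commute plus_1_eq_Suc)
    have l\<sigma>: "length \<sigma> = r + 1" using lP Pmap unfolding P_def by (metis length_map)
    have P'eq: "P'f \<pi> = map (fA A) \<tau>" unfolding P'f_def \<tau>_def \<sigma>_def A_def ..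
    have sP': "set (P'f \<pi>) = A" using P'eq s\<tau> fA_image[OF finA] cA by simp
    have dP': "distinct (P'f \<pi>)" using P'eq d\<tau> s\<tau> fA_inj[OF finA] cA by (simp add: distinct_map)
    have inv: "inversions P \<subseteq> inversions (P'f \<pi>)"
      using map_weak_le[of \<sigma> "fA A" \<tau>] fmono s\<sigma> s\<tau> le Pmap P'eq unfolding weak_le_def by simp
    have descP': "descents (P'f \<pi>) = S" using P'eq map_descents[of \<tau> "fA A"] fmono s\<tau> desc\<tau> by simp
    have first: "\<sigma>!0 \<le> \<tau>!0" using weak_le_first[OF d\<sigma> d\<tau> _ le] s\<sigma> s\<tau> l\<sigma> by simp
    have last: "\<tau>!r \<le> \<sigma>!r" using weak_le_last[OF d\<sigma> d\<tau> _ le] s\<sigma> s\<tau> l\<sigma> by simp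
    have m0: "\<sigma>!0 \<in> {1..r+1}" "\<tau>!0 \<in> {1..r+1}" "\<sigma>!r \<in> {1..r+1}" "\<tau>!r \<in> {1..r+1}"
      using s\<sigma> s\<tau> l\<sigma> l\<tau> nth_mem by (metis less_add_one zero_less_Suc add.commute plus_1_eq_Suc)+
    have fmono': "fA A p \<le> fA A q" if "p \<in> {1..r+1}" "q \<in> {1..r+1}" "p \<le> q" for p q
      using fmono that by (metis order_le_less)
    have "P!0 \<le> P'f \<pi> ! 0" using Pmap P'eq l\<sigma> l\<tau> fmono'[OF m0(1) m0(2) first] by simp
    moreover have "P'f \<pi> ! r \<le> P!r" using Pmap P'eq l\<sigma> l\<tau> fmono'[OF m0(4) m0(3) last] by simp
    moreover have "length (P'f \<pi>) = r + 1" using P'eq l\<tau> by simp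
    ultimately show ?thesis using len dec lP finA cA \<sigma>D Pmap sP' dP' inv descP'
      unfolding A_def P_def \<sigma>_def by simp
  qed
  have lt: "length (take k \<pi>) = k" if "\<pi> \<in> Dset N WT" for \<pi>
    using facts[OF that] N_def by simp
  have parts: "take k (\<Phi> \<pi>) = take k \<pi> \<and> take (r+1) (drop k (\<Phi> \<pi>)) = P'f \<pi> \<and>
       drop (k+r+1) (\<Phi> \<pi>) = drop (k+r+1) \<pi>" if "\<pi> \<in> Dset N WT" for \<pi>
    using facts[OF that] lt[OF that] unfolding \<Phi>_def by simp
  have inj: "inj_on \<Phi> (Dset N WT)"
  proof (rule inj_onI)
    fix \<pi>1 \<pi>2 assume p1: "\<pi>1 \<in> Dset N WT" and p2: "\<pi>2 \<in> Dset N WT" and eq: "\<Phi> \<pi>1 = \<Phi> \<pi>2"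
    note f1 = facts[OF p1] and f2 = facts[OF p2]
    have Q: "take k \<pi>1 = take k \<pi>2" and R: "drop (k+r+1) \<pi>1 = drop (k+r+1) \<pi>2"
      and P': "P'f \<pi>1 = P'f \<pi>2"
      using parts[OF p1] parts[OF p2] eq by metis+
    have A: "Af \<pi>1 = Af \<pi>2" using P' f1 f2 by metis
    have "\<phi> (\<sigma>f \<pi>1) = \<phi> (\<sigma>f \<pi>2)"
    proof (rule map_inj_on)
      show "map (fA (Af \<pi>1)) (\<phi> (\<sigma>f \<pi>1)) = map (fA (Af \<pi>1)) (\<phi> (\<sigma>f \<pi>2))"
        using P' A unfolding P'f_def by simp
      have "\<phi> (\<sigma>f \<pi>1) \<in> Dset r S" "\<phi> (\<sigma>f \<pi>2) \<in> Dset r S" using f1 f2 \<phi>img by blast+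
      then have "set (\<phi> (\<sigma>f \<pi>1)) \<union> set (\<phi> (\<sigma>f \<pi>2)) = {1..card (Af \<pi>1)}"
        using f1 unfolding Dset_def is_perm_def by simp
      then show "inj_on (fA (Af \<pi>1)) (set (\<phi> (\<sigma>f \<pi>1)) \<union> set (\<phi> (\<sigma>f \<pi>2)))"
        using fA_inj[of "Af \<pi>1"] f1 by simp
    qed
    then have "\<sigma>f \<pi>1 = \<sigma>f \<pi>2" using \<phi>inj f1 f2 unfolding inj_on_def by blast
    then have "Pf \<pi>1 = Pf \<pi>2" using f1 f2 A by metis
    then show "\<pi>1 = \<pi>2" using f1 f2 Q R by metis
  qed
  have img: "\<Phi> \<pi> \<in> Dset N WS" and wle: "weak_le \<pi> (\<Phi> \<pi>)" if p: "\<pi> \<in> Dset N WT" for \<pi>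
  proof -
    note f = facts[OF p]
    define Q where "Q = take k \<pi>"
    define P where "P = Pf \<pi>"
    define P' where "P' = P'f \<pi>"
    define R where "R = drop (k+r+1) \<pi>"
    have dec: "\<pi> = Q @ P @ R" using conjunct1[OF conjunct2[OF f]] unfolding Q_def P_def R_def .
    have dec': "\<Phi> \<pi> = Q @ P' @ R" unfolding Q_def P'_def R_def \<Phi>_def ..
    have fl: "length \<pi> = N+1" "length (Pf \<pi>) = r+1" "length (P'f \<pi>) = r+1" "set (P'f \<pi>) = Af \<pi>"
       "inversions (Pf \<pi>) \<subseteq> inversions (P'f \<pi>)" "descents (P'f \<pi>) = S"
       "Pf \<pi>!0 \<le> P'f \<pi>!0" "P'f \<pi>!r \<le> Pf \<pi>!r" using f by blast+
    have lQ: "length Q = k" unfolding Q_def using lt[OF p] .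
    have lP: "length P = r + 1" and lP': "length P' = r + 1" using fl unfolding P_def P'_def by simp_all
    have lR: "length R = length y" using fl unfolding R_def N_def by simp
    have sP: "set P' = set P" using fl unfolding P_def P'_def Af_def by simp
    have perm: "is_perm (N+1) \<pi>" and dpi: "descents \<pi> = WT" using p unfolding Dset_def by auto
    have dP': "distinct P'" using f unfolding P'_def by blast
    have pd: "distinct (Q@P@R) \<and> set (Q@P@R) = {1..N+1}" using perm unfolding is_perm_def
      by (simp only: dec[symmetric])
    have perm': "is_perm (N+1) (\<Phi> \<pi>)"
      unfolding dec' is_perm_def using pd sP dP' by auto
    have desc': "descents (\<Phi> \<pi>) = WS"
    proof (intro set_eqI)
      fix i
      consider "k < i \<and> i \<le> k + r" | "i = k" | "i = k + r + 1" | "\<not> (k \<le> i \<and> i \<le> k + r + 1)"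
        by linarith
      then show "i \<in> descents (\<Phi> \<pi>) \<longleftrightarrow> i \<in> WS"
      proof cases
        case 1
        then obtain j where j: "i = k + j" "1 \<le> j" "j \<le> r" by (metis Suc_le_eq add.commute le_add_diff_inverse2 less_imp_le_nat plus_1_eq_Suc le_diff_conv2 diff_add_inverse2 le_add1 nat_le_iff_add Suc_leI zero_less_diff)
        have "i \<in> descents (\<Phi> \<pi>) \<longleftrightarrow> j \<in> descents P'"
          using desc_block[of j P' Q R] j lQ lP' dec' by simp
        also have "\<dots> \<longleftrightarrow> j \<in> S" using fl unfolding P'_def by simp
        also have "\<dots> \<longleftrightarrow> i \<in> WS" using ws_block[of j r x S y] j unfolding WS_def k_def by simp
        finally show ?thesis .
      next
        case 2
        show ?thesis
        proof (cases "x = []")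
          case True
          then show ?thesis using 2 unfolding descents_def WS_def word_set_def k_def by simp
        next
          case False
          then have la: "last x = a" using hx by simp
          have Qne: "Q \<noteq> []" using lQ False k_def by auto
          have Pne: "P \<noteq> []" "P' \<noteq> []" using lP lP' by auto
          have "k \<notin> WT" using ws_left[OF False la] unfolding WT_def k_def .
          then have "\<not> Q!(length Q - 1) > P!0" using desc_left[OF Qne Pne(1), of R] dpi dec lQ by simp
          then have "\<not> Q!(length Q - 1) > P'!0" using fl unfolding P_def P'_def by simp
          then have "k \<notin> descents (\<Phi> \<pi>)" using desc_left[OF Qne Pne(2), of R] dec' lQ by simp
          moreover have "k \<notin> WS" using ws_left[OF False la] unfolding WS_def k_def .
          ultimately show ?thesis using 2 by simp
        qed
      next
        case 3
        show ?thesis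
        proof (cases "y = []")
          case True
          have "length (\<Phi> \<pi>) = N + 1" using perm' perm_length by blast
          then show ?thesis using 3 True lenw unfolding descents_def WS_def word_set_def N_def by simp
        next
          case False
          then have ha: "hd y = a" using hy by simp
          have Rne: "R \<noteq> []" using lR False by auto
          have Pne: "P \<noteq> []" "P' \<noteq> []" using lP lP' by auto
          have "k + r + 1 \<notin> WT" using ws_right[OF False ha] unfolding WT_def k_def .
          then have "\<not> P!(length P - 1) > R!0" using desc_right[OF Rne Pne(1), of Q] dpi dec lQ lP by simp
          then have "\<not> P'!(length P' - 1) > R!0" using fl lP lP' unfolding P_def P'_def by simp
          then have "k + r + 1 \<notin> descents (\<Phi> \<pi>)" using desc_right[OF Rne Pne(2), of Q] dec' lQ lP' by simp
          moreover have "k + r + 1 \<notin> WS" using ws_right[OF False ha] unfolding WS_def k_def .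
          ultimately show ?thesis using 3 by simp
        qed
      next
        case 4
        have "i \<in> descents (\<Phi> \<pi>) \<longleftrightarrow> i \<in> descents \<pi>"
          using desc_outside[of P' P Q i R] 4 lQ lP lP' dec dec' by simp
        also have "\<dots> \<longleftrightarrow> i \<in> WT" using dpi by simp
        also have "\<dots> \<longleftrightarrow> i \<in> WS" using ws_outside[of x i r T y S] 4 unfolding WS_def WT_def k_def by auto
        finally show ?thesis .
      qed
    qed
    show "\<Phi> \<pi> \<in> Dset N WS" using perm' desc' unfolding Dset_def by simp
    have "inversions P \<subseteq> inversions P'" using fl unfolding P_def P'_def by simp
    then have i1: "inversions (Q@P@R) \<subseteq> inversions (Q@P'@R)" unfolding inversions_append
      using sP by auto
    have "inversions \<pi> = inversions (Q@P@R)" using dec by (rule arg_cong)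
    then show "weak_le \<pi> (\<Phi> \<pi>)" unfolding weak_le_def dec' using i1 by simp
  qed
  have "dominates N WS WT"
    unfolding dominates_def using inj img wle by blast
  then show ?thesis unfolding word_dominates_def using lenw WS_def WT_def by simp
qed

theorem proposition5p3:
  fixes r :: nat and S T :: "nat set" and u v :: word
  assumes "S \<subseteq> {1..r}" and "T \<subseteq> {1..r}"
    and "dominates r S T"
  shows "word_dominates (mword r S @ [a] @ v) (mword r T @ [a] @ v) \<and>
         word_dominates (u @ [a] @ mword r S) (u @ [a] @ mword r T) \<and>
         word_dominates (u @ [a] @ mword r S @ [a] @ v) (u @ [a] @ mword r T @ [a] @ v)"
proof (intro conjI)
  show "word_dominates (mword r S @ [a] @ v) (mword r T @ [a] @ v)"
    using main[OF assms(2,3), of "[]" "[a] @ v"] by simp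
  show "word_dominates (u @ [a] @ mword r S) (u @ [a] @ mword r T)"
    using main[OF assms(2,3), of "u @ [a]" "[]"] by simp
  show "word_dominates (u @ [a] @ mword r S @ [a] @ v) (u @ [a] @ mword r T @ [a] @ v)"
    using main[OF assms(2,3), of "u @ [a]" "[a] @ v"] by simp
qed

end
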